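(* Let $v_1,\dots,v_n\in\mathbb{R}^d$, let $x\in[0,1]^n$ with $\sum_{i=1}^n x(i)=q$ and $X=\sum_i x(i)v_iv_i^\top$ nonsingular. Let $S\subseteq[n]$ with $|S|=b$ be such that $Z=\sum_{i\in S}v_iv_i^\top$ is nonsingular, and let $Z'$ be a minimizer of $\operatorname{tr}((Z-v_iv_i^\top+v_jv_j^\top)^{-1})$ over all pairs $i\in S$, $j\in[n]\setminus S$ (singular matrices having value $+\infty$). For any $\varepsilon>0$, if \[ \operatorname{tr}(Z^{-1})\ge(1+\varepsilon)\operatorname{tr}(X^{-1})\quad\text{and}\quad b\ge q+2d+2(1+\varepsilon)\sqrt{\operatorname{tr}(X)\operatorname{tr}(X^{-1})}, \] then $\operatorname{tr}(Z'^{-1})\le\big(1-\frac{\varepsilon}{b}\big)\operatorname{tr}(Z^{-1})$. *)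

theory Defs
  imports "HOL-Analysis.Analysis"
begin

definition outer :: "real^'d \<Rightarrow> real^'d^'d" where
  "outer v = (\<chi> i j. v $ i * v $ j)"

definition inv_trace_cost :: "real^'d^'d \<Rightarrow> ereal" where
  "inv_trace_cost M = (if invertible M then ereal (trace (matrix_inv M)) else \<infinity>)"

end

theory Submission
  imports Defs
begin


definition outer2 :: "real^'n \<Rightarrow> real^'n \<Rightarrow> real^'n^'n" where
  "outer2 u w = (\<chi> a c. u $ a * w $ c)"

lemma outer_outer2: "outer v = outer2 v v"
  by (simp add: outer_def outer2_def)

lemma outer2_nth[simp]: "outer2 u w $ a $ c = u $ a * w $ c"
  by (simp add: outer2_def)

lemma mul_outer2: "(M::real^'n^'n) ** outer2 u w = outer2 (M *v u) w"
  by (simp add: vec_eq_iff matrix_matrix_mult_def matrix_vector_mult_def sum_distrib_right mult.assoc)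

lemma outer2_mul: "outer2 u w ** (M::real^'n^'n) = outer2 u (w v* M)"
  by (simp add: vec_eq_iff matrix_matrix_mult_def vector_matrix_mult_def sum_distrib_left mult.assoc mult.commute mult.left_commute)

lemma outer2_mulv: "outer2 u w *v y = (w \<bullet> y) *\<^sub>R u"
  by (simp add: vec_eq_iff matrix_vector_mult_def inner_vec_def sum_distrib_left mult.commute mult.left_commute)

lemma trace_outer2: "trace (outer2 u w) = u \<bullet> w"
  by (simp add: trace_def inner_vec_def)

lemma trace_scaleR: "trace (c *\<^sub>R (M::real^'n^'n)) = c * trace M"
  by (simp add: trace_def sum_distrib_left)

lemma trace_sum: "trace (sum f A) = (\<Sum>i\<in>A. trace (f i :: real^'n^'n))"
  by (simp add: trace_def sum_component) (rule sum.swap)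

lemma mat_mul_sum: "(M::real^'n^'n) ** sum f A = (\<Sum>i\<in>A. M ** f i)"
  by (induction A rule: infinite_finite_induct) (auto simp: matrix_add_ldistrib)

lemma sum_mulv: "sum f A *v (y::real^'n) = (\<Sum>i\<in>A. (f i :: real^'n^'n) *v y)"
  by (induction A rule: infinite_finite_induct) (auto simp: matrix_vector_mult_add_rdistrib)

lemma mat_mul_scaleR: "(M::real^'n^'n) ** (c *\<^sub>R N) = c *\<^sub>R (M ** N)"
  by (simp add: matrix_scalar_ac scalar_matrix_assoc)

lemma inner_mulv: "(M *v a) \<bullet> (b::real^'n) = a \<bullet> (transpose M *v b)"
  by (metis dot_lmul_matrix inner_commute transpose_matrix_vector transpose_transpose)

lemma trace_weighted:
  fixes M :: "real^'n^'n"
  shows "(\<Sum>k\<in>A. c k * (v k \<bullet> (M *v v k))) = trace (M ** (\<Sum>k\<in>A. c k *\<^sub>R outer (v k)))"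
  by (simp add: mat_mul_sum trace_sum mat_mul_scaleR trace_scaleR outer_outer2 mul_outer2 trace_outer2 inner_commute)

lemma trace_unweighted:
  fixes M :: "real^'n^'n"
  shows "(\<Sum>k\<in>A. (v k \<bullet> (M *v v k))) = trace (M ** (\<Sum>k\<in>A. outer (v k)))"
  using trace_weighted[of "\<lambda>_. 1" v M A] by simp

lemma matrix_inv_props:
  assumes "invertible (A::real^'n^'n)"
  shows "A ** matrix_inv A = mat 1" "matrix_inv A ** A = mat 1"
proof -
  have "\<exists>A'. A ** A' = mat 1 \<and> A' ** A = mat 1" using assms invertible_def by blast
  from someI_ex[OF this] show "A ** matrix_inv A = mat 1" "matrix_inv A ** A = mat 1"
    unfolding matrix_inv_def by auto
qed

lemma matrix_inv_sym:
  assumes "invertible (A::real^'n^'n)" "transpose A = A"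
  shows "transpose (matrix_inv A) = matrix_inv A"
proof -
  have "transpose (matrix_inv A) ** A = mat 1"
    by (metis assms matrix_inv_props(1) matrix_transpose_mul transpose_mat)
  then have "transpose (matrix_inv A) = transpose (matrix_inv A) ** (A ** matrix_inv A)"
    using matrix_inv_props(1)[OF assms(1)] by simp
  also have "\<dots> = matrix_inv A" using \<open>transpose (matrix_inv A) ** A = mat 1\<close>
    by (simp add: matrix_mul_assoc)
  finally show ?thesis .
qed

lemma matrix_inv_eq:
  assumes "(A::real^'n^'n) ** B = mat 1"
  shows "invertible A" "matrix_inv A = B"
proof -
  show inv: "invertible A" using assms invertible_right_inverse by blast
  have "matrix_inv A = matrix_inv A ** (A ** B)" using assms by simp
  also have "\<dots> = B" using matrix_inv_props(2)[OF inv] by (simp add: matrix_mul_assoc)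
  finally show "matrix_inv A = B" .
qed

lemma transpose_outer: "transpose (outer v) = outer v"
  by (simp add: outer_def transpose_def vec_eq_iff mult.commute)

lemma transpose_sum: "transpose (sum f A) = (\<Sum>i\<in>A. transpose (f i :: real^'n^'n))"
  by (simp add: transpose_def vec_eq_iff sum_component)

lemma transpose_scaleR': "transpose (c *\<^sub>R (M::real^'n^'n)) = c *\<^sub>R transpose M"
  by (simp add: transpose_scalar)


lemma mat_add_rdistrib: "((A::real^'n^'n) + B) ** C = A ** C + B ** C"
  by (simp add: vec_eq_iff matrix_matrix_mult_def sum.distrib distrib_right)

lemma mat_diff_rdistrib: "((A::real^'n^'n) - B) ** C = A ** C - B ** C"
  by (simp add: vec_eq_iff matrix_matrix_mult_def sum_subtractf left_diff_distrib)

lemma mat_diff_ldistrib: "(C::real^'n^'n) ** (A - B) = C ** A - C ** B"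
  by (simp add: vec_eq_iff matrix_matrix_mult_def sum_subtractf right_diff_distrib)

lemma disc_le:
  fixes a b c :: real
  assumes "\<And>t. 0 \<le> a*t^2 - 2*b*t + c" "a \<ge> 0"
  shows "b^2 \<le> a*c"
proof (cases "a = 0")
  case True
  show ?thesis
  proof (rule ccontr)
    assume "\<not> ?thesis"
    then have "b \<noteq> 0" using True by simp
    have "0 \<le> a*((c+1)/(2*b))^2 - 2*b*((c+1)/(2*b)) + c" by (rule assms(1))
    then show False using True \<open>b \<noteq> 0\<close> by simp
  qed
next
  case False
  then have ap: "a > 0" using assms(2) by simp
  have "0 \<le> a*(b/a)^2 - 2*b*(b/a) + c" by (rule assms(1))
  also have "\<dots> = c - b^2/a" using ap by (simp add: power2_eq_square field_simps)
  finally show ?thesis using ap by (simp add: field_simps)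
qed

lemma pair_cross:
  fixes hij hi hj tj tij :: real
  assumes "hij^2 \<le> hi*hj" "hi \<ge> 0" "hj \<ge> 0" "tj \<ge> 0" "tij^2 \<le> tj"
  shows "2*tij*hij \<ge> -(tij^2*(hj/tj) + hi*tj)"
proof (cases "tj = 0")
  case True
  then have "tij = 0" using assms(5) by simp
  then show ?thesis using True by simp
next
  case False
  then have tp: "tj > 0" using assms(4) by simp
  define a where "a = tij^2*hj"
  define c where "c = hi*tj^2"
  define e where "e = tij*tj*hij"
  have a0: "a \<ge> 0" "c \<ge> 0" unfolding a_def c_def using assms by auto
  have "e^2 = tij^2*tj^2*hij^2" unfolding e_def by (simp add: power_mult_distrib)
  also have "\<dots> \<le> tij^2*tj^2*(hi*hj)" using assms(1) by (intro mult_left_mono) auto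
  also have "\<dots> = a*c" unfolding a_def c_def by (simp add: algebra_simps)
  finally have eac: "e^2 \<le> a*c" .
  have "(2*e)^2 \<le> (a+c)^2"
  proof -
    have "(a+c)^2 - 4*(a*c) = (a-c)^2" by (simp add: power2_eq_square algebra_simps)
    then show ?thesis using eac by (simp add: power2_eq_square) (smt (verit) zero_le_square)
  qed
  then have "\<bar>2*e\<bar> \<le> \<bar>a+c\<bar>" using abs_le_square_iff by blast
  then have k: "0 \<le> a + c + 2*e" using a0 by linarith
  have "tj * (2*tij*hij + (tij^2*(hj/tj) + hi*tj)) = a + c + 2*e"
    unfolding a_def c_def e_def using tp by (simp add: field_simps power2_eq_square)
  then have "0 \<le> tj * (2*tij*hij + (tij^2*(hj/tj) + hi*tj))" using k by simp
  then have "0 \<le> 2*tij*hij + (tij^2*(hj/tj) + hi*tj)" using tp by (simp add: zero_le_mult_iff)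
  then show ?thesis by linarith
qed



lemma final_real:
  fixes d b e w r u H P m s A1 q :: real
  assumes d1: "d \<ge> 1" and bpos: "b > 0" and epos: "e > 0" and wpos: "w > 0" and rpos: "r > 0"
    and wr: "w \<ge> (1+e) * r" and u0: "0 \<le> u" and uw: "u \<le> w"
    and Hr: "H * r \<ge> w^2 - u * r" and HD: "H \<ge> (1+e)*w - u"
    and P0: "P \<ge> 0" and m0: "m \<ge> 0" and PH: "P^2 \<le> H * s" and s0: "s \<ge> 0"
    and A1lo: "A1 \<ge> b - q + m - d" and A1hi: "A1 \<le> b - d"
    and hb: "b \<ge> q + 2*d + 2*(1+e)* sqrt (s*r)"
  shows "H*(A1-1) - (w-u)*(m+P) - (w-u)*P - (e*w/b)*(A1*(m+P)+P) \<ge> 0"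
proof -
  define D where "D = (1+e)*w - u"
  define B1 where "B1 = w - u"
  define \<sigma> where "\<sigma> = sqrt (s*r)"
  have ew: "e*w > 0" using epos wpos by simp
  have Deq: "(1+e)*w - u = e*w + (w-u)" by (simp add: algebra_simps)
  have H0: "H \<ge> 0" using HD uw ew Deq by linarith
  have A1pos: "A1 \<ge> 0" using A1lo hb d1 m0 \<sigma>_def
    by (smt (verit, best) epos mult_nonneg_nonneg real_sqrt_ge_zero rpos s0)
  have dA: "(e*w/b)*A1 \<le> e*w"
  proof -
    have "A1 \<le> b" using A1hi d1 by simp
    then have "(e*w/b)*A1 \<le> (e*w/b)*b" using epos wpos bpos by (intro mult_left_mono) auto
    then show ?thesis using bpos by simp
  qed
  have dA1: "(e*w/b)*(A1+1) \<le> e*w"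
  proof -
    have "A1 + 1 \<le> b" using A1hi d1 by simp
    then have "(e*w/b)*(A1+1) \<le> (e*w/b)*b" using epos wpos bpos by (intro mult_left_mono) auto
    then show ?thesis using bpos by simp
  qed
  have sub: "(w-u)*(m+P) + (w-u)*P + (e*w/b)*(A1*(m+P)+P) \<le> D*m + (D+B1)*P"
  proof -
    have "(e*w/b)*(A1*(m+P)+P) = ((e*w/b)*A1)*m + ((e*w/b)*(A1+1))*P" by (simp add: algebra_simps add_divide_distrib)
    also have "\<dots> \<le> (e*w)*m + (e*w)*P"
      using dA dA1 m0 P0 by (intro add_mono mult_right_mono) auto
    finally show ?thesis unfolding D_def B1_def by (simp add: algebra_simps)
  qed
  have sq1: "(D+B1)^2 \<le> 4*(1+e)^2*(H*r)"
  proof -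
    have a: "4*(1+e)^2*(H*r) \<ge> 4*(1+e)^2*(w^2 - u*r)" using Hr by (intro mult_left_mono) auto
    have b: "u*((1+e)*r) \<le> u*w" using wr u0 by (intro mult_left_mono) auto
    have c: "4*(1+e)^2*(w^2 - u*r) = 4*(1+e)^2*w^2 - 4*(1+e)*(u*((1+e)*r))"
      by (simp add: power2_eq_square algebra_simps)
    have c2: "4*(1+e)*(u*((1+e)*r)) \<le> 4*(1+e)*(u*w)" using mult_left_mono[OF b, of "4*(1+e)"] epos by simp
    have "4*(1+e)^2*(w^2 - u*r) \<ge> 4*(1+e)^2*w^2 - 4*(1+e)*u*w"
      using c c2 by (simp add: algebra_simps)
    moreover have "4*(1+e)^2*w^2 - 4*(1+e)*u*w - (D+B1)^2 = w^2*(4*e+3*e^2) + 4*u*(w-u)"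
      unfolding D_def B1_def by (simp add: power2_eq_square algebra_simps)
    moreover have "w^2*(4*e+3*e^2) + 4*u*(w-u) \<ge> 0" using epos u0 uw by simp
    ultimately show ?thesis using a by linarith
  qed
  have DB0: "D + B1 \<ge> 0" unfolding D_def B1_def using uw ew Deq by linarith
  have key: "(D+B1)*P \<le> 2*(1+e)*H*\<sigma>"
  proof -
    have "((D+B1)*P)^2 = (D+B1)^2 * P^2" by (simp add: power_mult_distrib)
    also have "\<dots> \<le> (4*(1+e)^2*(H*r)) * (H* s)"
      using sq1 PH H0 rpos by (intro mult_mono) auto
    also have "\<dots> = (2*(1+e)*H*\<sigma>)^2"
    proof -
      have "\<sigma>*\<sigma> = s*r" unfolding \<sigma>_def using s0 rpos
        by (metis less_imp_le mult_nonneg_nonneg power2_eq_square real_sqrt_pow2)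
      moreover have e1: "(2*(1+e)*H*\<sigma>)^2 = 4*(1+e)^2*H^2*(\<sigma>*\<sigma>)" by (simp add: power2_eq_square algebra_simps)
      ultimately have "(2*(1+e)*H*\<sigma>)^2 = 4*(1+e)^2*H^2*(s*r)" by simp
      moreover have "(4*(1+e)^2*(H*r))*(H* s) = 4*(1+e)^2*H^2*(s*r)" by (simp add: power2_eq_square algebra_simps)
      ultimately show ?thesis by argo
    qed
    finally have "((D+B1)*P)^2 \<le> (2*(1+e)*H*\<sigma>)^2" .
    moreover have "2*(1+e)*H*\<sigma> \<ge> 0" unfolding \<sigma>_def using H0 epos s0 rpos by simp
    ultimately show ?thesis using power2_le_imp_le by blast
  qed
  have "H*(A1-1) \<ge> H*(m + 2*(1+e)*\<sigma>)"
    using A1lo hb d1 H0 unfolding \<sigma>_def by (intro mult_left_mono) auto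
  moreover have "H*m \<ge> D*m" using HD m0 unfolding D_def by (intro mult_right_mono) auto
  ultimately show ?thesis using sub key by (simp add: algebra_simps)
qed



theorem proposition3p8:
  fixes v :: "nat \<Rightarrow> real^'d" and x :: "nat \<Rightarrow> real" and n b :: nat
    and q \<epsilon> :: real and S :: "nat set" and X Z Z' :: "real^'d^'d"
  assumes x_range: "\<forall>i<n. 0 \<le> x i \<and> x i \<le> 1"
    and q_def: "q = (\<Sum>i<n. x i)"
    and X_def: "X = (\<Sum>i<n. x i *\<^sub>R outer (v i))"
    and X_inv: "invertible X"
    and S_sub: "S \<subseteq> {..<n}"
    and S_card: "card S = b"
    and Z_def: "Z = (\<Sum>i\<in>S. outer (v i))"
    and Z_inv: "invertible Z"
    and Z'_cand: "\<exists>i\<in>S. \<exists>j\<in>{..<n} - S. Z' = Z - outer (v i) + outer (v j)"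
    and Z'_min: "\<forall>i\<in>S. \<forall>j\<in>{..<n} - S.
                   inv_trace_cost Z' \<le> inv_trace_cost (Z - outer (v i) + outer (v j))"
    and eps_pos: "\<epsilon> > 0"
    and hyp1: "trace (matrix_inv Z) \<ge> (1 + \<epsilon>) * trace (matrix_inv X)"
    and hyp2: "real b \<ge> q + 2 * real CARD('d)
                 + 2 * (1 + \<epsilon>) * sqrt (trace X * trace (matrix_inv X))"
  shows "inv_trace_cost Z' \<le> ereal ((1 - \<epsilon> / real b) * trace (matrix_inv Z))"
proof -
  define W where "W = matrix_inv Z"
  define R where "R = matrix_inv X"
  define d where "d = real CARD('d)"
  define w where "w = trace W"
  define r where "r = trace R"
  define s where "s = trace X"
  define tau where "tau k l = v k \<bullet> (W *v v l)" for k l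
  define h where "h k l = (W *v v k) \<bullet> (W *v v l)" for k l
  define Ou where "Ou = {..<n} - S"
  have finS: "finite S" using S_sub finite_subset by blast
  have finO: "finite Ou" unfolding Ou_def by simp
  have xS: "\<And>i. i \<in> S \<Longrightarrow> 0 \<le> x i \<and> x i \<le> 1" using x_range S_sub by auto
  have xO: "\<And>i. i \<in> Ou \<Longrightarrow> 0 \<le> x i \<and> x i \<le> 1" using x_range unfolding Ou_def by auto
  have Zsym: "transpose Z = Z" unfolding Z_def by (simp add: transpose_sum transpose_outer)
  have Xsym: "transpose X = X" unfolding X_def by (simp add: transpose_sum transpose_outer transpose_scaleR')
  have ZW: "Z ** W = mat 1" "W ** Z = mat 1" unfolding W_def using matrix_inv_props[OF Z_inv] by auto
  have XR: "X ** R = mat 1" "R ** X = mat 1" unfolding R_def using matrix_inv_props[OF X_inv] by auto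
  have Wsym: "transpose W = W" unfolding W_def using matrix_inv_sym[OF Z_inv Zsym] .
  have Rsym: "transpose R = R" unfolding R_def using matrix_inv_sym[OF X_inv Xsym] .
  have Wv_sym: "(W *v a) \<bullet> b' = a \<bullet> (W *v b')" for a b' using inner_mulv[of W a b'] Wsym by simp
  have Rv_sym: "(R *v a) \<bullet> b' = a \<bullet> (R *v b')" for a b' using inner_mulv[of R a b'] Rsym by simp
  have tau_sym: "tau k l = tau l k" for k l
    unfolding tau_def by (metis Wv_sym inner_commute)
  have Zv: "Z *v y = (\<Sum>k\<in>S. (v k \<bullet> y) *\<^sub>R v k)" for y
    unfolding Z_def by (simp add: sum_mulv outer_outer2 outer2_mulv)
  have sq_sum: "(\<Sum>k\<in>S. (v k \<bullet> y)^2) = y \<bullet> (Z *v y)" for y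
    unfolding Zv by (simp add: inner_sum_right power2_eq_square inner_commute)
  have tau_sq: "(\<Sum>k\<in>S. (tau k l)^2) = tau l l" for l
  proof -
    have "(\<Sum>k\<in>S. (tau k l)^2) = (W *v v l) \<bullet> (Z *v (W *v v l))"
      unfolding tau_def by (rule sq_sum)
    also have "\<dots> = tau l l" unfolding tau_def
      by (simp add: matrix_vector_mul_assoc ZW inner_commute)
    finally show ?thesis .
  qed
  have tau_nn: "tau l l \<ge> 0" for l unfolding tau_sq[symmetric] by (simp add: sum_nonneg)
  have tau_le: "(tau i l)^2 \<le> tau l l" if "i \<in> S" for i l
    unfolding tau_sq[symmetric, of l] by (rule member_le_sum[OF that]) (auto simp: finS)
  have tau_le1: "tau i i \<le> 1" if "i \<in> S" for i
  proof -
    have "tau i i * tau i i \<le> tau i i * 1" using tau_le[OF that, of i] by (simp add: power2_eq_square)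
    show ?thesis
    proof (rule ccontr)
      assume "\<not> tau i i \<le> 1"
      then have "tau i i * 1 < tau i i * tau i i" by (intro mult_strict_left_mono) auto
      then show False using \<open>tau i i * tau i i \<le> tau i i * 1\<close> by simp
    qed
  qed
  have tau_trace: "(\<Sum>i\<in>S. tau i i) = d"
    unfolding tau_def d_def trace_unweighted Z_def[symmetric] ZW trace_I by simp
  have hWW: "h k k = v k \<bullet> ((W ** W) *v v k)" for k
    unfolding h_def by (simp add: Wv_sym matrix_vector_mul_assoc)
  have h_trace: "(\<Sum>i\<in>S. h i i) = w"
    unfolding hWW trace_unweighted Z_def[symmetric] w_def
    by (simp add: matrix_mul_assoc[symmetric] ZW)
  have h_nn: "h k k \<ge> 0" for k unfolding h_def by simp
  have h_cs: "(h i j)^2 \<le> h i i * h j j" for i j unfolding h_def by (rule Cauchy_Schwarz_ineq)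
  have Xtr: "(\<Sum>k<n. x k * (v k \<bullet> (M *v v k))) = trace (M ** X)" for M
    unfolding X_def by (rule trace_weighted)
  have sum_h_all: "(\<Sum>k<n. x k * h k k) = trace (W ** W ** X)"
    unfolding hWW by (rule Xtr)
  have sum_WR: "(\<Sum>k<n. x k * ((W *v v k) \<bullet> (R *v v k))) = w"
  proof -
    have "(\<Sum>k<n. x k * ((W *v v k) \<bullet> (R *v v k))) = (\<Sum>k<n. x k * (v k \<bullet> ((W ** R) *v v k)))"
      by (simp add: Wv_sym matrix_vector_mul_assoc)
    also have "\<dots> = trace (W ** R ** X)" by (rule Xtr)
    also have "\<dots> = w" unfolding w_def by (simp add: matrix_mul_assoc[symmetric] XR)
    finally show ?thesis .
  qed
  have sum_RR: "(\<Sum>k<n. x k * ((R *v v k) \<bullet> (R *v v k))) = r"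
  proof -
    have "(\<Sum>k<n. x k * ((R *v v k) \<bullet> (R *v v k))) = (\<Sum>k<n. x k * (v k \<bullet> ((R ** R) *v v k)))"
      by (simp add: Rv_sym matrix_vector_mul_assoc)
    also have "\<dots> = trace (R ** R ** X)" by (rule Xtr)
    also have "\<dots> = r" unfolding r_def by (simp add: matrix_mul_assoc[symmetric] XR)
    finally show ?thesis .
  qed
  have s_eq: "s = (\<Sum>k<n. x k * (v k \<bullet> v k))"
    using Xtr[of "mat 1"] unfolding s_def by simp
  define T where "T = (\<Sum>k<n. x k * h k k)"
  have quad: "0 \<le> r*t^2 - 2*w*t + T" for t
  proof -
    have eq: "x k * ((W *v v k - t *\<^sub>R (R *v v k)) \<bullet> (W *v v k - t *\<^sub>R (R *v v k)))
       = x k * h k k - 2*t*(x k * ((W *v v k) \<bullet> (R *v v k))) + t^2*(x k*((R *v v k) \<bullet> (R *v v k)))" for k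
      by (simp add: h_def inner_diff_left inner_diff_right inner_commute algebra_simps power2_eq_square)
    have "0 \<le> (\<Sum>k<n. x k * ((W *v v k - t *\<^sub>R (R *v v k)) \<bullet> (W *v v k - t *\<^sub>R (R *v v k))))"
      using x_range by (intro sum_nonneg) auto
    also have "\<dots> = (\<Sum>k<n. x k * h k k - 2*t*(x k * ((W *v v k) \<bullet> (R *v v k))) + t^2*(x k*((R *v v k) \<bullet> (R *v v k))))"
      using eq by simp
    also have "\<dots> = T - 2*t*w + t^2*r"
      unfolding T_def sum_WR[symmetric] sum_RR[symmetric]
      by (simp add: sum.distrib sum_subtractf sum_distrib_left)
    finally show ?thesis by (simp add: algebra_simps)
  qed
  have r_nn: "r \<ge> 0" unfolding sum_RR[symmetric] using x_range by (intro sum_nonneg) auto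
  have d1: "d \<ge> 1" unfolding d_def by simp
  have w_pos: "w > 0"
  proof -
    have "(\<Sum>i\<in>S. tau i i) \<noteq> 0" using tau_trace d1 by simp
    then obtain i where iS: "i \<in> S" and ti: "tau i i \<noteq> 0" by (meson sum.neutral)
    then have "W *v v i \<noteq> 0" unfolding tau_def by auto
    then have "h i i > 0" unfolding h_def by simp
    moreover have "h i i \<le> w" unfolding h_trace[symmetric]
      by (rule member_le_sum[OF iS]) (auto simp: h_nn finS)
    ultimately show ?thesis by simp
  qed
  have r_pos: "r > 0"
  proof (rule ccontr)
    assume "\<not> r > 0"
    then have r0: "r = 0" using r_nn by simp
    have "0 \<le> r*((T+1)/(2*w))^2 - 2*w*((T+1)/(2*w)) + T" by (rule quad)
    then show False using r0 w_pos by simp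
  qed
  have wr: "w \<ge> (1+\<epsilon>)*r" using hyp1 unfolding w_def r_def W_def R_def by simp
  define u where "u = (\<Sum>i\<in>S. x i * h i i)"
  define Hs where "Hs = (\<Sum>j\<in>Ou. x j * h j j)"
  define m where "m = (\<Sum>j\<in>Ou. x j)"
  define P where "P = (\<Sum>j\<in>Ou. x j * tau j j)"
  define qS where "qS = (\<Sum>i\<in>S. x i)"
  have split: "(\<Sum>k<n. f k) = (\<Sum>k\<in>S. f k) + (\<Sum>k\<in>Ou. f k)" for f :: "nat \<Rightarrow> real"
    unfolding Ou_def using sum.subset_diff[OF S_sub, of f] by simp
  have TuH: "T = u + Hs" unfolding T_def u_def Hs_def by (rule split)
  have qsplit: "q = qS + m" unfolding q_def qS_def m_def by (rule split)
  have TK: "T*r \<ge> w^2"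
  proof -
    have "0 \<le> r*(w/r)^2 - 2*w*(w/r) + T" by (rule quad)
    also have "\<dots> = T - w^2/r" using r_pos by (simp add: power2_eq_square field_simps)
    finally show ?thesis using r_pos by (simp add: field_simps)
  qed
  have Hr: "Hs*r \<ge> w^2 - u*r" using TK TuH by (simp add: algebra_simps)
  have HD: "Hs \<ge> (1+\<epsilon>)*w - u"
  proof -
    have "w*((1+\<epsilon>)*r) \<le> w*w" using wr w_pos by (intro mult_left_mono) auto
    then have "(1+\<epsilon>)*w*r \<le> T*r" using TK by (simp add: power2_eq_square algebra_simps)
    then have "(1+\<epsilon>)*w \<le> T" using r_pos by simp
    then show ?thesis using TuH by simp
  qed
  have u0: "u \<ge> 0" unfolding u_def using xS h_nn by (intro sum_nonneg) auto
  have uw: "u \<le> w" unfolding u_def h_trace[symmetric]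
    using xS h_nn by (intro sum_mono) (simp add: mult_left_le_one_le)
  have m0: "m \<ge> 0" unfolding m_def using xO by (intro sum_nonneg) auto
  have P0: "P \<ge> 0" unfolding P_def using xO tau_nn by (intro sum_nonneg) auto
  have s0: "s \<ge> 0" unfolding s_eq using x_range by (intro sum_nonneg) auto
  have PH: "P^2 \<le> Hs * s"
  proof -
    define a where "a j = sqrt (x j) * norm (v j)" for j
    define c where "c j = sqrt (x j) * norm (W *v v j)" for j
    have "P \<le> (\<Sum>j\<in>Ou. a j * c j)" unfolding P_def
    proof (intro sum_mono)
      fix j assume "j \<in> Ou"
      then have "x j \<ge> 0" using xO by auto
      then have "a j * c j = x j * (norm (v j) * norm (W *v v j))" unfolding a_def c_def
        by (simp add: algebra_simps real_sqrt_mult_self)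
      moreover have "tau j j \<le> norm (v j) * norm (W *v v j)" unfolding tau_def by (rule norm_cauchy_schwarz)
      ultimately show "x j * tau j j \<le> a j * c j" using \<open>x j \<ge> 0\<close> by (simp add: mult_left_mono)
    qed
    then have "P^2 \<le> (\<Sum>j\<in>Ou. a j * c j)^2" using P0 by (simp add: power_mono)
    also have "\<dots> \<le> (\<Sum>j\<in>Ou. (a j)^2) * (\<Sum>j\<in>Ou. (c j)^2)" by (rule Cauchy_Schwarz_ineq_sum)
    finally have c1: "P^2 \<le> (\<Sum>j\<in>Ou. (a j)^2) * (\<Sum>j\<in>Ou. (c j)^2)" .
    have c2: "(\<Sum>j\<in>Ou. (a j)^2) = (\<Sum>j\<in>Ou. x j * (v j \<bullet> v j))" unfolding a_def
      using xO by (intro sum.cong) (auto simp: power_mult_distrib power2_norm_eq_inner)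
    have c3: "(\<Sum>j\<in>Ou. (c j)^2) = Hs" unfolding c_def Hs_def h_def
      using xO by (intro sum.cong) (auto simp: power_mult_distrib power2_norm_eq_inner)
    have c4: "(\<Sum>j\<in>Ou. x j * (v j \<bullet> v j)) \<le> s" unfolding s_eq split[of "\<lambda>k. x k * (v k \<bullet> v k)"]
      using xS by (simp add: sum_nonneg)
    have H0: "Hs \<ge> 0" unfolding Hs_def using xO h_nn by (intro sum_nonneg) auto
    have "P^2 \<le> (\<Sum>j\<in>Ou. x j * (v j \<bullet> v j)) * Hs" using c1 c2 c3 by simp
    also have "\<dots> \<le> s * Hs" using c4 H0 by (rule mult_right_mono)
    finally show ?thesis by (simp add: mult.commute)
  qed
  have H0: "Hs \<ge> 0" unfolding Hs_def using xO h_nn by (intro sum_nonneg) auto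
  have bpos: "real b > 0"
  proof -
    have "q \<ge> 0" unfolding q_def using x_range by (intro sum_nonneg) auto
    moreover have "sqrt (trace X * trace (matrix_inv X)) \<ge> 0" using s0 r_nn unfolding s_def r_def R_def by simp
    moreover have "2 * (1 + \<epsilon>) * sqrt (trace X * trace (matrix_inv X)) \<ge> 0"
      using calculation(2) eps_pos by simp
    ultimately show ?thesis using hyp2 d1 unfolding d_def by linarith
  qed
  define A1 where "A1 = (\<Sum>i\<in>S. (1 - x i)*(1 - tau i i))"
  define B1 where "B1 = (\<Sum>i\<in>S. (1 - x i)*h i i)"
  have A1_eq: "A1 = real b - qS - d + (\<Sum>i\<in>S. x i * tau i i)"
  proof -
    have "A1 = (\<Sum>i\<in>S. 1 - x i - tau i i + x i * tau i i)" unfolding A1_def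
      by (intro sum.cong) (auto simp: algebra_simps)
    also have "\<dots> = real (card S) - qS - (\<Sum>i\<in>S. tau i i) + (\<Sum>i\<in>S. x i * tau i i)"
      unfolding qS_def by (simp add: sum.distrib sum_subtractf)
    finally show ?thesis using S_card tau_trace by simp
  qed
  have sxt0: "(\<Sum>i\<in>S. x i * tau i i) \<ge> 0" using xS tau_nn by (intro sum_nonneg) auto
  have sxt1: "(\<Sum>i\<in>S. x i * tau i i) \<le> qS" unfolding qS_def
    using xS tau_le1 by (intro sum_mono) (simp add: mult_left_le)
  have A1lo: "A1 \<ge> real b - q + m - d" using A1_eq qsplit sxt0 by simp
  have A1hi: "A1 \<le> real b - d" using A1_eq sxt1 by simp
  have B1_eq: "B1 = w - u" unfolding B1_def u_def h_trace[symmetric]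
    by (simp add: sum_subtractf algebra_simps)
  define \<delta> where "\<delta> = \<epsilon>*w/real b"
  have \<delta>0: "\<delta> \<ge> 0" unfolding \<delta>_def using eps_pos w_pos bpos by simp
  define N where "N i j = h j j*(1 - tau i i) - h i i*(1 + tau j j) + 2*tau i j*h i j" for i j
  define Dl where "Dl i j = (1 - tau i i)*(1 + tau j j) + (tau i j)^2" for i j
  define G where "G i j = N i j - \<delta> * Dl i j" for i j
  define L where "L i j = h j j*(1 - tau i i) - h i i*(1 + tau j j) - (tau i j)^2*(h j j/tau j j)
      - h i i*tau j j - \<delta>*(1 + tau j j)*(1 - tau i i) - \<delta>*(tau i j)^2" for i j
  have GL: "G i j \<ge> L i j" if "i \<in> S" for i j
  proof -
    have "G i j - L i j = 2*tau i j*h i j + ((tau i j)^2*(h j j/tau j j) + h i i*tau j j)"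
      unfolding G_def L_def N_def Dl_def by (simp add: algebra_simps)
    moreover have "2*tau i j*h i j \<ge> -((tau i j)^2*(h j j/tau j j) + h i i*tau j j)"
      by (rule pair_cross) (auto simp: h_cs h_nn tau_nn tau_le[OF that])
    ultimately show ?thesis by linarith
  qed
  define E where "E j = (\<Sum>i\<in>S. (1 - x i)*(tau i j)^2)" for j
  have E_le: "E j \<le> tau j j" for j
  proof -
    have "E j \<le> (\<Sum>i\<in>S. (tau i j)^2)" unfolding E_def
      using xS by (intro sum_mono) (simp add: mult_left_le_one_le)
    then show ?thesis using tau_sq by simp
  qed
  have E_nn: "E j \<ge> 0" for j unfolding E_def using xS by (intro sum_nonneg) auto
  define Fl where "Fl j = h j j*A1 - (1 + tau j j)*B1 - h j j - tau j j*B1 - \<delta>*(1 + tau j j)*A1 - \<delta>*tau j j" for j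
  have sumL: "(\<Sum>i\<in>S. (1 - x i)*L i j) = h j j*A1 - (1 + tau j j)*B1 - (h j j/tau j j)*E j
      - tau j j*B1 - \<delta>*(1 + tau j j)*A1 - \<delta>*E j" for j
  proof -
    define c where "c = h j j/tau j j"
    have "(\<Sum>i\<in>S. (1 - x i)*L i j) = (\<Sum>i\<in>S. h j j*((1 - x i)*(1 - tau i i)) - (1 + tau j j)*((1 - x i)*h i i)
       - c*((1 - x i)*(tau i j)^2) - tau j j*((1 - x i)*h i i)
       - \<delta>*(1 + tau j j)*((1 - x i)*(1 - tau i i)) - \<delta>*((1 - x i)*(tau i j)^2))"
      unfolding L_def c_def[symmetric] by (intro sum.cong) (auto simp: algebra_simps)
    also have "\<dots> = h j j*A1 - (1 + tau j j)*B1 - (h j j/tau j j)*E j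
      - tau j j*B1 - \<delta>*(1 + tau j j)*A1 - \<delta>*E j"
      unfolding A1_def B1_def E_def c_def by (simp add: sum_subtractf sum_distrib_left)
    finally show ?thesis .
  qed
  have Fj: "(\<Sum>i\<in>S. (1 - x i)*G i j) \<ge> Fl j" for j
  proof -
    have "(\<Sum>i\<in>S. (1 - x i)*G i j) \<ge> (\<Sum>i\<in>S. (1 - x i)*L i j)"
      using xS GL by (intro sum_mono mult_left_mono) auto
    moreover have "(h j j/tau j j)*E j \<le> h j j"
    proof (cases "tau j j = 0")
      case True then show ?thesis using h_nn by simp
    next
      case False
      then have "tau j j > 0" using tau_nn[of j] by simp
      then have "E j / tau j j \<le> 1" using E_le by simp
      then have "h j j * (E j / tau j j) \<le> h j j * 1" using h_nn by (intro mult_left_mono) auto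
      then show ?thesis by simp
    qed
    moreover have "\<delta>*E j \<le> \<delta>*tau j j" using E_le \<delta>0 by (intro mult_left_mono) auto
    ultimately show ?thesis unfolding sumL Fl_def by linarith
  qed
  define F where "F = (\<Sum>j\<in>Ou. x j * (\<Sum>i\<in>S. (1 - x i)*G i j))"
  have F_ge: "F \<ge> (\<Sum>j\<in>Ou. x j * Fl j)" unfolding F_def
    using xO Fj by (intro sum_mono mult_left_mono) auto
  have sumFl: "(\<Sum>j\<in>Ou. x j * Fl j) = Hs*A1 - (m + P)*B1 - Hs - P*B1 - \<delta>*(m + P)*A1 - \<delta>*P"
  proof -
    have "(\<Sum>j\<in>Ou. x j * Fl j) = (\<Sum>j\<in>Ou. A1*(x j * h j j) - B1*(x j) - B1*(x j*tau j j) - (x j * h j j)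
        - B1*(x j*tau j j) - (\<delta>*A1)*(x j) - (\<delta>*A1)*(x j * tau j j) - \<delta>*(x j*tau j j))"
      unfolding Fl_def by (intro sum.cong) (auto simp: algebra_simps)
    also have "\<dots> = Hs*A1 - (m + P)*B1 - Hs - P*B1 - \<delta>*(m + P)*A1 - \<delta>*P"
      unfolding Hs_def m_def P_def by (simp only: sum_subtractf sum_distrib_left[symmetric]) (simp add: algebra_simps)
    finally show ?thesis .
  qed
  have fin: "Hs*(A1-1) - (w-u)*(m+P) - (w-u)*P - (\<epsilon>*w/real b)*(A1*(m+P)+P) \<ge> 0"
    apply (rule final_real[OF d1 bpos eps_pos w_pos r_pos wr u0 uw Hr HD P0 m0 PH s0 A1lo A1hi])
    using hyp2 unfolding d_def s_def r_def R_def by simp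
  have F0: "F \<ge> 0"
  proof -
    have "(\<Sum>j\<in>Ou. x j * Fl j) = Hs*(A1-1) - (w-u)*(m+P) - (w-u)*P - (\<epsilon>*w/real b)*(A1*(m+P)+P)"
      unfolding sumFl B1_eq \<delta>_def by (simp add: algebra_simps add_divide_distrib)
    then show ?thesis using F_ge fin by linarith
  qed
  have ex_pair: "\<exists>i\<in>S. \<exists>j\<in>Ou. G i j \<ge> 0"
  proof (rule ccontr)
    assume nex: "\<not> ?thesis"
    have neg: "G i j < 0" if "i \<in> S" "j \<in> Ou" for i j
    proof (rule ccontr)
      assume "\<not> G i j < 0"
      then have "G i j \<ge> 0" by simp
      then show False using nex that by blast
    qed
    have "\<epsilon>*w > 0" using eps_pos w_pos by simp
    moreover have "(1+\<epsilon>)*w - u = \<epsilon>*w + (w - u)" by (simp add: algebra_simps)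
    ultimately have Hpos: "Hs > 0" using HD uw by linarith
    have "\<exists>j\<in>Ou. x j * h j j \<noteq> 0"
    proof (rule ccontr)
      assume "\<not> (\<exists>j\<in>Ou. x j * h j j \<noteq> 0)"
      then have "Hs = 0" unfolding Hs_def by (intro sum.neutral) blast
      then show False using Hpos by simp
    qed
    then obtain j0 where j0: "j0 \<in> Ou" "x j0 * h j0 j0 \<noteq> 0" by blast
    then have "x j0 \<noteq> 0" by auto
    then have xj0: "x j0 > 0" using xO[OF j0(1)] by simp
    have "2 * (1 + \<epsilon>) * sqrt (trace X * trace (matrix_inv X)) \<ge> 0"
      using s0 r_nn eps_pos unfolding s_def r_def R_def by simp
    then have qSb: "qS < real b" using qsplit m0 hyp2 d1 unfolding d_def by linarith
    have "\<exists>i\<in>S. x i < 1"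
    proof (rule ccontr)
      assume nx: "\<not> (\<exists>i\<in>S. x i < 1)"
      have "x i = 1" if "i \<in> S" for i
      proof -
        have "\<not> x i < 1" using nx that by blast
        then show ?thesis using xS[OF that] by simp
      qed
      then have "qS = (\<Sum>i\<in>S. 1)" unfolding qS_def by (intro sum.cong) auto
      then have "qS = real b" using S_card by simp
      then show False using qSb by simp
    qed
    then obtain i0 where i0: "i0 \<in> S" "x i0 < 1" by blast
    have inner_neg: "(\<Sum>i\<in>S. (1 - x i)*G i j) < 0" if jO: "j \<in> Ou" for j
    proof -
      have "(\<Sum>i\<in>S. (1 - x i)*G i j) < (\<Sum>i\<in>S. 0)"
      proof (rule sum_strict_mono_ex1[OF finS])
        show "\<forall>i\<in>S. (1 - x i) * G i j \<le> 0"
        proof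
          fix i assume iS: "i \<in> S"
          have "1 - x i \<ge> 0" using xS[OF iS] by simp
          moreover have "G i j \<le> 0" using neg[OF iS jO] by simp
          ultimately show "(1 - x i) * G i j \<le> 0" by (rule mult_nonneg_nonpos)
        qed
        have "1 - x i0 > 0" using i0 by simp
        then have "(1 - x i0) * G i0 j < 0" using neg[OF i0(1) jO] by (rule mult_pos_neg)
        then show "\<exists>i\<in>S. (1 - x i) * G i j < 0" using i0(1) by blast
      qed
      then show ?thesis by simp
    qed
    have "F < (\<Sum>j\<in>Ou. 0)" unfolding F_def
    proof (rule sum_strict_mono_ex1[OF finO])
      show "\<forall>j\<in>Ou. x j * (\<Sum>i\<in>S. (1 - x i)*G i j) \<le> 0"
      proof
        fix j assume jO: "j \<in> Ou"
        have "x j \<ge> 0" using xO[OF jO] by simp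
        moreover have "(\<Sum>i\<in>S. (1 - x i)*G i j) \<le> 0" using inner_neg[OF jO] by simp
        ultimately show "x j * (\<Sum>i\<in>S. (1 - x i)*G i j) \<le> 0" by (rule mult_nonneg_nonpos)
      qed
      have "x j0 * (\<Sum>i\<in>S. (1 - x i)*G i j0) < 0" using xj0 inner_neg[OF j0(1)] by (rule mult_pos_neg)
      then show "\<exists>j\<in>Ou. x j * (\<Sum>i\<in>S. (1 - x i)*G i j) < 0" using j0(1) by blast
    qed
    then show False using F0 by simp
  qed
  then obtain i j where iS: "i \<in> S" and jO: "j \<in> Ou" and Gij: "G i j \<ge> 0" by blast
  have ti1: "tau i i \<le> 1" using tau_le1[OF iS] .
  have tj0: "tau j j \<ge> 0" using tau_nn .
  have Dl_pos: "Dl i j > 0"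
  proof (rule ccontr)
    assume "\<not> Dl i j > 0"
    moreover have "(1 - tau i i)*(1 + tau j j) \<ge> 0" using ti1 tj0 by simp
    moreover have "(tau i j)^2 \<ge> 0" by simp
    ultimately have z1: "(1 - tau i i)*(1 + tau j j) = 0" and z2: "(tau i j)^2 = 0"
      unfolding Dl_def by linarith+
    have tii: "tau i i = 1" using z1 tj0 by simp
    have tij: "tau i j = 0" using z2 by simp
    have "W *v v i \<noteq> 0" using tii unfolding tau_def by auto
    then have hp: "h i i > 0" unfolding h_def by simp
    have "G i j = - h i i * (1 + tau j j)"
      unfolding G_def N_def Dl_def using tii tij by simp
    moreover have "h i i * (1 + tau j j) > 0" using hp tj0 by simp
    ultimately show False using Gij by simp
  qed
  define a where "a = v i"
  define c where "c = v j"
  define p where "p = W *v a"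
  define rr where "rr = W *v c"
  define Z2 where "Z2 = Z - outer a + outer c"
  have ap: "a \<bullet> p = tau i i" by (simp add: a_def c_def p_def rr_def tau_def h_def)
  have cp: "c \<bullet> p = tau i j" unfolding c_def p_def a_def using tau_sym[of j i] unfolding tau_def by simp
  have ar: "a \<bullet> rr = tau i j" by (simp add: a_def c_def p_def rr_def tau_def h_def)
  have cr: "c \<bullet> rr = tau j j" by (simp add: a_def c_def p_def rr_def tau_def h_def)
  have pp: "p \<bullet> p = h i i" by (simp add: a_def c_def p_def rr_def tau_def h_def)
  have prr: "p \<bullet> rr = h i j" by (simp add: a_def c_def p_def rr_def tau_def h_def)
  have rrp: "rr \<bullet> p = h i j" using prr by (simp add: inner_commute)
  have rrrr: "rr \<bullet> rr = h j j" by (simp add: a_def c_def p_def rr_def tau_def h_def)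
  have Zp: "Z *v p = a" unfolding p_def by (simp add: matrix_vector_mul_assoc ZW)
  have Zr: "Z *v rr = c" unfolding rr_def by (simp add: matrix_vector_mul_assoc ZW)
  have Z2p: "Z2 *v p = (1 - tau i i) *\<^sub>R a + tau i j *\<^sub>R c"
    unfolding Z2_def outer_outer2
    by (simp add: matrix_vector_mult_diff_rdistrib matrix_vector_mult_add_rdistrib Zp outer2_mulv ap cp
        algebra_simps)
  have Z2r: "Z2 *v rr = (- tau i j) *\<^sub>R a + (1 + tau j j) *\<^sub>R c"
    unfolding Z2_def outer_outer2
    by (simp add: matrix_vector_mult_diff_rdistrib matrix_vector_mult_add_rdistrib Zr outer2_mulv ar cr
        algebra_simps)
  have vW: "y v* W = W *v y" for y
    using vector_transpose_matrix[of y W] Wsym by simp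
  have Z2W: "Z2 ** W = mat 1 - outer2 a p + outer2 c rr"
    unfolding Z2_def outer_outer2
    by (simp add: mat_add_rdistrib mat_diff_rdistrib ZW outer2_mul vW p_def rr_def)
  define Q where "Q = (1 + tau j j) *\<^sub>R outer2 p p - tau i j *\<^sub>R outer2 p rr
      - tau i j *\<^sub>R outer2 rr p - (1 - tau i i) *\<^sub>R outer2 rr rr"
  have Z2Q: "Z2 ** Q = Dl i j *\<^sub>R outer2 a p - Dl i j *\<^sub>R outer2 c rr"
  proof -
    have "Z2 ** Q = (1 + tau j j) *\<^sub>R outer2 (Z2 *v p) p - tau i j *\<^sub>R outer2 (Z2 *v p) rr
      - tau i j *\<^sub>R outer2 (Z2 *v rr) p - (1 - tau i i) *\<^sub>R outer2 (Z2 *v rr) rr"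
      unfolding Q_def by (simp add: mat_diff_ldistrib mat_mul_scaleR mul_outer2)
    also have "\<dots> = Dl i j *\<^sub>R outer2 a p - Dl i j *\<^sub>R outer2 c rr"
      unfolding Z2p Z2r Dl_def
      by (simp add: vec_eq_iff algebra_simps power2_eq_square)
    finally show ?thesis .
  qed
  define M' where "M' = W + (1 / Dl i j) *\<^sub>R Q"
  have Z2M: "Z2 ** M' = mat 1"
  proof -
    have "Z2 ** M' = Z2 ** W + (1 / Dl i j) *\<^sub>R (Z2 ** Q)"
      unfolding M'_def by (simp add: matrix_add_ldistrib mat_mul_scaleR)
    also have "\<dots> = mat 1" unfolding Z2W Z2Q using Dl_pos
      by (simp add: scaleR_right_diff_distrib)
    finally show ?thesis .
  qed
  have trM: "trace M' = w - N i j / Dl i j"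
  proof -
    have "trace Q = (1 + tau j j) * h i i - tau i j * h i j - tau i j * h i j - (1 - tau i i) * h j j"
      unfolding Q_def by (simp add: trace_sub trace_scaleR trace_outer2 pp prr rrp rrrr)
    then have "trace M' = w + (1 / Dl i j) * ((1 + tau j j) * h i i - tau i j * h i j - tau i j * h i j - (1 - tau i i) * h j j)"
      unfolding M'_def w_def by (simp add: trace_add trace_scaleR)
    also have "\<dots> = w - N i j / Dl i j" using Dl_pos unfolding N_def by (simp add: field_simps)
    finally show ?thesis .
  qed
  have cost: "inv_trace_cost Z2 = ereal (w - N i j / Dl i j)"
    using matrix_inv_eq[OF Z2M] trM unfolding inv_trace_cost_def by simp
  have "\<delta> * Dl i j \<le> N i j" using Gij unfolding G_def by simp
  then have "\<delta> \<le> N i j / Dl i j" using Dl_pos by (simp add: pos_le_divide_eq)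
  then have "w - N i j / Dl i j \<le> (1 - \<epsilon> / real b) * w"
    unfolding \<delta>_def by (simp add: algebra_simps)
  then have "inv_trace_cost Z2 \<le> ereal ((1 - \<epsilon> / real b) * w)" using cost by simp
  moreover have "inv_trace_cost Z' \<le> inv_trace_cost Z2"
    using Z'_min iS jO unfolding Z2_def a_def c_def Ou_def by blast
  ultimately show ?thesis unfolding w_def W_def by simp
qed
end
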